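(* Let $(P_n)_{n\in\mathbb{Z}}$ be the Padovan sequence. Let $a,b,m$ be integers with $1\le b\le a$, $m\ge 0$, and $n=am+b>a$. Then for every integer $k\ge 0$ there exist integers $c_1,c_2,c_3$ with $$P_n=c_1P_{a(k+2)+b}+c_2P_{a(k+1)+b}+c_3P_{ak+b};$$ in particular $P_n$ is an integer linear combination of $P_{2a+b}$, $P_{a+b}$ and $P_b$.
   Context: The Padovan sequence is defined by $P_0=P_1=P_2=1$ and $P_{n+3}=P_{n+1}+P_n$, extended to negative indices via $P_n=P_{n+3}-P_{n+1}$. The entries $P_b,P_{a+b},P_{2a+b},\dots$ form the $b$th column of the "$a$ columns Padovan table" (the array whose rows are $P_{ja+1},\dots,P_{ja+a}$, $j=0,1,2,\dots$). *)

theory Defs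
  imports Main
begin

fun pad_pos :: "nat \<Rightarrow> int" where
  "pad_pos 0 = 1"
| "pad_pos (Suc 0) = 1"
| "pad_pos (Suc (Suc 0)) = 1"
| "pad_pos (Suc (Suc (Suc n))) = pad_pos (Suc n) + pad_pos n"

text \<open>pad_neg j = P_(-j), obtained from P_n = P_(n+3) - P_(n+1):
  P_0 = 1, P_(-1) = P_2 - P_0 = 0, P_(-2) = P_1 - P_(-1) = 1,
  P_(-(j+3)) = P_(-j) - P_(-(j+2)).\<close>
fun pad_neg :: "nat \<Rightarrow> int" where
  "pad_neg 0 = 1"
| "pad_neg (Suc 0) = 0"
| "pad_neg (Suc (Suc 0)) = 1"
| "pad_neg (Suc (Suc (Suc j))) = pad_neg j - pad_neg (Suc (Suc j))"

definition padovan :: "int \<Rightarrow> int" where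
  "padovan n = (if n \<ge> 0 then pad_pos (nat n) else pad_neg (nat (- n)))"

end

theory Submission
  imports Defs
begin

lemma pad_rec: "padovan (x + 3) = padovan (x + 1) + padovan x"
proof -
  consider "x \<ge> 0" | "x = -1" | "x = -2" | "x = -3" | "x \<le> -4" by linarith
  then show ?thesis
  proof cases
    case 1
    then have "nat (x+3) = Suc (Suc (Suc (nat x)))" "nat (x+1) = Suc (nat x)" by auto
    then show ?thesis using 1 by (simp add: padovan_def)
  next
    case 2 then show ?thesis by (simp add: padovan_def numeral_eq_Suc)
  next
    case 3 then show ?thesis by (simp add: padovan_def numeral_eq_Suc)
  next
    case 4 then show ?thesis by (simp add: padovan_def numeral_eq_Suc)
  next
    case 5
    define j where "j = nat (- x - 3)"
    have j: "nat (-x) = Suc (Suc (Suc j))" "nat (-(x+3)) = j" "nat (-(x+1)) = Suc (Suc j)"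
      using 5 by (auto simp: j_def)
    show ?thesis using 5 j by (simp add: padovan_def)
  qed
qed

datatype m3 = M3 int int int int int int int int int

fun app :: "m3 \<Rightarrow> int \<times> int \<times> int \<Rightarrow> int \<times> int \<times> int" where
  "app (M3 a b c d e f g h i) (x, y, z) = (a*x+b*y+c*z, d*x+e*y+f*z, g*x+h*y+i*z)"

fun mmul :: "m3 \<Rightarrow> m3 \<Rightarrow> m3" where
  "mmul (M3 a b c d e f g h i) (M3 a' b' c' d' e' f' g' h' i') =
    M3 (a*a'+b*d'+c*g') (a*b'+b*e'+c*h') (a*c'+b*f'+c*i')
       (d*a'+e*d'+f*g') (d*b'+e*e'+f*h') (d*c'+e*f'+f*i')
       (g*a'+h*d'+i*g') (g*b'+h*e'+i*h') (g*c'+h*f'+i*i')"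

fun det3 :: "m3 \<Rightarrow> int" where
  "det3 (M3 a b c d e f g h i) = a*(e*i - f*h) - b*(d*i - f*g) + c*(d*h - e*g)"

fun tr3 :: "m3 \<Rightarrow> int" where
  "tr3 (M3 a b c d e f g h i) = a + e + i"

fun c23 :: "m3 \<Rightarrow> int" where
  "c23 (M3 a b c d e f g h i) = (a*e - b*d) + (a*i - c*g) + (e*i - f*h)"

lemma app_mmul: "app (mmul A B) v = app A (app B v)"
  by (cases A; cases B; cases v) (simp add: algebra_simps)

lemma det_mmul: "det3 (mmul A B) = det3 A * det3 B"
  by (cases A; cases B) (simp add: algebra_simps)

lemma CH: "fst (app N (app N (app N v))) =
  tr3 N * fst (app N (app N v)) - c23 N * fst (app N v) + det3 N * fst v"
  by (cases N; cases v) (simp add: algebra_simps)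

definition vec :: "int \<Rightarrow> int \<times> int \<times> int" where
  "vec x = (padovan x, padovan (x+1), padovan (x+2))"

definition Mp :: m3 where "Mp = M3 0 1 0 0 0 1 1 1 0"

lemma app_Mp: "app Mp (vec x) = vec (x + 1)"
  using pad_rec[of x] by (simp add: Mp_def vec_def add.assoc)

fun mpow :: "nat \<Rightarrow> m3" where
  "mpow 0 = M3 1 0 0 0 1 0 0 0 1"
| "mpow (Suc n) = mmul (mpow n) Mp"

lemma app_mpow: "app (mpow n) (vec x) = vec (x + int n)"
proof (induction n arbitrary: x)
  case 0 then show ?case by (simp add: vec_def)
next
  case (Suc n) then show ?case by (simp add: app_mmul app_Mp algebra_simps)
qed

lemma det_mpow: "det3 (mpow n) = 1"
  by (induction n) (simp_all add: det_mmul Mp_def)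

lemma rec3:
  assumes "a \<ge> 0"
  shows "\<exists>s t. \<forall>x. padovan (x + 3*a) = s * padovan (x + 2*a) + t * padovan (x + a) + padovan x"
proof -
  define N where "N = mpow (nat a)"
  have A: "app N (vec x) = vec (x + a)" for x using assms by (simp add: N_def app_mpow)
  have D: "det3 N = 1" by (simp add: N_def det_mpow)
  show ?thesis
  proof (intro exI allI)
    fix x
    have "fst (app N (app N (app N (vec x)))) =
      tr3 N * fst (app N (app N (vec x))) - c23 N * fst (app N (vec x)) + det3 N * fst (vec x)"
      by (rule CH)
    moreover have "app N (vec x) = vec (x + a)" by (rule A)
    moreover have "app N (vec (x + a)) = vec (x + 2*a)" using A[of "x+a"] by (simp add: algebra_simps)
    moreover have "app N (vec (x + 2*a)) = vec (x + 3*a)" using A[of "x+2*a"] by (simp add: algebra_simps)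
    ultimately show "padovan (x + 3*a) = tr3 N * padovan (x + 2*a) + (- c23 N) * padovan (x + a) + padovan x"
      using D by (simp add: vec_def)
  qed
qed

lemma span_all:
  fixes Q :: "int \<Rightarrow> int"
  assumes R: "\<And>j. Q (j + 3) = s * Q (j + 2) + t * Q (j + 1) + Q j"
  shows "\<exists>c1 c2 c3. Q m = c1 * Q (k+2) + c2 * Q (k+1) + c3 * Q k"
proof -
  define S where "S = {y. \<exists>c1 c2 c3. y = c1 * Q (k+2) + c2 * Q (k+1) + c3 * Q k}"
  have lin: "u*p + v*q + w*r \<in> S" if P: "p \<in> S" "q \<in> S" "r \<in> S" for u v w p q r
  proof -
    obtain a1 a2 a3 where "p = a1 * Q (k+2) + a2 * Q (k+1) + a3 * Q k" using P(1) unfolding S_def by auto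
    moreover obtain b1 b2 b3 where "q = b1 * Q (k+2) + b2 * Q (k+1) + b3 * Q k" using P(2) unfolding S_def by auto
    moreover obtain d1 d2 d3 where "r = d1 * Q (k+2) + d2 * Q (k+1) + d3 * Q k" using P(3) unfolding S_def by auto
    ultimately have "u*p + v*q + w*r = (u*a1+v*b1+w*d1) * Q (k+2) + (u*a2+v*b2+w*d2) * Q (k+1)
        + (u*a3+v*b3+w*d3) * Q k" by (simp add: algebra_simps)
    then show ?thesis unfolding S_def by blast
  qed
  have b0: "Q k \<in> S" "Q (k+1) \<in> S" "Q (k+2) \<in> S" unfolding S_def
    by (rule CollectI, rule exI[of _ 0], rule exI[of _ 0], rule exI[of _ 1], simp,
        rule CollectI, rule exI[of _ 0], rule exI[of _ 1], rule exI[of _ 0], simp,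
        rule CollectI, rule exI[of _ 1], rule exI[of _ 0], rule exI[of _ 0], simp)
  have up: "Q (k + int d) \<in> S \<and> Q (k + int d + 1) \<in> S \<and> Q (k + int d + 2) \<in> S" for d
  proof (induction d)
    case 0 then show ?case using b0 by simp
  next
    case (Suc d)
    then have "Q (k + int d + 3) \<in> S" using R[of "k + int d"] lin[of "Q (k + int d + 2)" "Q (k + int d + 1)" "Q (k + int d)" s t 1]
      by (simp add: add.assoc)
    with Suc show ?case by (simp add: algebra_simps)
  qed
  have down: "Q (k - int d) \<in> S \<and> Q (k - int d + 1) \<in> S \<and> Q (k - int d + 2) \<in> S" for d
  proof (induction d)
    case 0 then show ?case using b0 by simp
  next
    case (Suc d)
    let ?j = "k - int d - 1"
    have e: "Q ?j = 1 * Q (?j + 3) + (-s) * Q (?j + 2) + (-t) * Q (?j + 1)" using R[of ?j] by simp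
    have "Q (?j+3) \<in> S" "Q (?j+2) \<in> S" "Q (?j+1) \<in> S" using Suc by (simp_all add: algebra_simps)
    then have "Q ?j \<in> S" using e lin by metis
    with Suc show ?case by (simp add: algebra_simps)
  qed
  have "Q m \<in> S"
  proof (cases "m \<ge> k")
    case True
    then have "m = k + int (nat (m - k))" by simp
    then show ?thesis using up[of "nat (m-k)"] by metis
  next
    case False
    then have "m = k - int (nat (k - m))" by simp
    then show ?thesis using down[of "nat (k-m)"] by metis
  qed
  then show ?thesis unfolding S_def by blast
qed

theorem theorem3p4:
  fixes a b m n :: int
  assumes "1 \<le> b" and "b \<le> a" and "0 \<le> m" and "n = a * m + b" and "n > a"
  shows "(\<forall>k::int. k \<ge> 0 \<longrightarrow>
            (\<exists>c1 c2 c3 :: int. padovan n = c1 * padovan (a * (k + 2) + b)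
                                  + c2 * padovan (a * (k + 1) + b) + c3 * padovan (a * k + b)))
         \<and> (\<exists>c1 c2 c3 :: int. padovan n = c1 * padovan (2 * a + b)
                                  + c2 * padovan (a + b) + c3 * padovan b)"
proof -
  obtain s t where st: "\<And>x. padovan (x + 3*a) = s * padovan (x + 2*a) + t * padovan (x + a) + padovan x"
    using rec3[of a] assms by auto
  define Q where "Q j = padovan (a * j + b)" for j
  have R: "Q (j + 3) = s * Q (j + 2) + t * Q (j + 1) + Q j" for j
    using st[of "a * j + b"] by (simp add: Q_def algebra_simps)
  have all: "\<exists>c1 c2 c3. padovan n = c1 * padovan (a * (k + 2) + b)
              + c2 * padovan (a * (k + 1) + b) + c3 * padovan (a * k + b)" for k
    using span_all[OF R, of m k] assms(4) by (simp add: Q_def)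
  have "\<exists>c1 c2 c3. padovan n = c1 * padovan (2 * a + b)
              + c2 * padovan (a + b) + c3 * padovan b"
    using all[of 0] by (simp add: mult.commute)
  with all show ?thesis by blast
qed

end
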